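(* Assume the standing assumptions below and let $X_*$ be the unique symmetric positive semidefinite solution of $\mathscr R(X)=0$, where $\mathscr R(X)=A^{\mathsf T}X+XA+Q+\Pi_{11}(X)-[XB+L+\Pi_{12}(X)][R+\Pi_{22}(X)]^{-1}[XB+L+\Pi_{12}(X)]^{\mathsf T}$. Consider the modified Newton iteration: given symmetric $X_0$, for $k\ge0$ let $X_{k+1}$ be the solution of $$\widehat A_k^{\mathsf T}X_{k+1}+X_{k+1}\widehat A_k+\widehat\Pi_k(X_k)+M_k=0,$$ with $R_k=R+\Pi_{22}(X_k)$, $S_k=X_kB+L+\Pi_{12}(X_k)$, $\widehat A_k=A-BR_k^{-1}S_k^{\mathsf T}$, $P_k=\begin{bmatrix}I_n\\-R_k^{-1}S_k^{\mathsf T}\end{bmatrix}$, $\widehat\Pi_k(X)=P_k^{\mathsf T}\Pi(X)P_k$, $M_k=P_k^{\mathsf T}\begin{bmatrix}Q&L\\L^{\mathsf T}&R\end{bmatrix}P_k$. Suppose $X_0\succeq X_*$, $A_{\mathrm c}(X_0)-G_{\mathrm c}(X_0)X_0$ has all eigenvalues in the open left half-plane, and $\mathscr R(X_0)\preceq0$. If the sequence $\{X_k\}$ exists and $X_k\succeq0$ for all $k$, then (a) $X_0\succeq X_1\succeq\cdots\succeq X_k\succeq X_*$ and $\mathscr R(X_k)\preceq0$ for $k\ge0$; (b) $\lim_{k\to\infty}X_k=X_*$.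
   Context: Data: $A,Q\in\mathbb{R}^{n\times n}$, $B,L\in\mathbb{R}^{n\times m}$, $R\in\mathbb{R}^{m\times m}$, $A_0^i\in\mathbb{R}^{n\times n}$, $B_0^i\in\mathbb{R}^{n\times m}$ ($i=1,\dots,r$); $A_0^0=A$, $B_0^0=B$. For symmetric $X$: $\Pi(X)=\begin{bmatrix}\Pi_{11}(X)&\Pi_{12}(X)\\\Pi_{12}(X)^{\mathsf T}&\Pi_{22}(X)\end{bmatrix}$ with $\Pi_{11}(X)=\sum_{i=1}^r (A_0^i)^{\mathsf T}XA_0^i$, $\Pi_{12}(X)=\sum_i (A_0^i)^{\mathsf T}XB_0^i$, $\Pi_{22}(X)=\sum_i (B_0^i)^{\mathsf T}XB_0^i$; $L_{\mathrm c}=L+\Pi_{12}$, $R_{\mathrm c}=R+\Pi_{22}$; $A_{\mathrm c}(X)=A-BR_{\mathrm c}(X)^{-1}L_{\mathrm c}(X)^{\mathsf T}$, $G_{\mathrm c}(X)=BR_{\mathrm c}(X)^{-1}B^{\mathsf T}$. Standing assumptions: (1) $R\succ0$, $\begin{bmatrix}Q&L\\L^{\mathsf T}&R\end{bmatrix}\succeq0$; (2) there is $F\in\mathbb{R}^{m\times n}$ with $\dot S=(A+BF)S+S(A+BF)^{\mathsf T}+\sum_{i=1}^r(A_0^i+B_0^iF)S(A_0^i+B_0^iF)^{\mathsf T}$ exponentially stable; (3) with $C^{\mathsf T}C=Q-LR^{-1}L^{\mathsf T}$, $C\in\mathbb{R}^{p\times n}$, and $\widetilde A_0^i=A_0^i-B_0^iR^{-1}L^{\mathsf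 T}$, there is $K\in\mathbb{R}^{n\times p}$ with $\dot S=(\widetilde A_0^0+KC)S+S(\widetilde A_0^0+KC)^{\mathsf T}+\sum_{i=1}^r\widetilde A_0^iS(\widetilde A_0^i)^{\mathsf T}$ exponentially stable; (4) $\mathcal N(Q-LR^{-1}L^{\mathsf T})\subseteq\mathcal N(L^{\mathsf T})\cap\bigcap_i\mathcal N(A_0^i)$; (5) $(A,B)$ stabilizable and $(Q-LR^{-1}L^{\mathsf T},A)$ detectable. Under (1)–(3), $\mathscr R(X)=0$ has a unique positive semidefinite solution $X_*$, which is stabilizing. *)

theory Defs
  imports "HOL-Analysis.Analysis"
begin

text \<open>Matrices are HOL-Analysis matrices: an n x m real matrix is of type real^'m^'n
  (rows indexed by 'n, columns by 'm). Block matrices are indexed by the sum type.\<close>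

definition psd :: "real^'n^'n \<Rightarrow> bool" where
  "psd M \<longleftrightarrow> transpose M = M \<and> (\<forall>x. x \<bullet> (M *v x) \<ge> 0)"

definition pd :: "real^'n^'n \<Rightarrow> bool" where
  "pd M \<longleftrightarrow> transpose M = M \<and> (\<forall>x. x \<noteq> 0 \<longrightarrow> x \<bullet> (M *v x) > 0)"

definition loewner_ge :: "real^'n^'n \<Rightarrow> real^'n^'n \<Rightarrow> bool" where
  "loewner_ge X Y \<longleftrightarrow> psd (X - Y)"

definition blockm :: "real^'b^'a \<Rightarrow> real^'d^'a \<Rightarrow> real^'b^'c \<Rightarrow> real^'d^'c
     \<Rightarrow> real^('b + 'd)^('a + 'c)" where
  "blockm M11 M12 M21 M22 = (\<chi> i j. case i of
       Inl a \<Rightarrow> (case j of Inl b \<Rightarrow> M11 $ a $ b | Inr d \<Rightarrow> M12 $ a $ d)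
     | Inr c \<Rightarrow> (case j of Inl b \<Rightarrow> M21 $ c $ b | Inr d \<Rightarrow> M22 $ c $ d))"

definition vstack :: "real^'b^'a \<Rightarrow> real^'b^'c \<Rightarrow> real^'b^('a + 'c)" where
  "vstack U V = (\<chi> i j. case i of Inl a \<Rightarrow> U $ a $ j | Inr c \<Rightarrow> V $ c $ j)"

definition cmat :: "real^'m^'n \<Rightarrow> complex^'m^'n" where
  "cmat M = (\<chi> i j. complex_of_real (M $ i $ j))"

definition hurwitz :: "real^'n^'n \<Rightarrow> bool" where
  "hurwitz M \<longleftrightarrow> (\<forall>(z::complex) (v::complex^'n). v \<noteq> 0 \<and> cmat M *v v = z *s v \<longrightarrow> Re z < 0)"

definition exp_stable :: "(real^'n^'n \<Rightarrow> real^'n^'n) \<Rightarrow> bool" where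
  "exp_stable Op \<longleftrightarrow> (\<exists>M c. c > 0 \<and>
     (\<forall>S. (\<forall>t\<ge>0. (S has_vector_derivative Op (S t)) (at t within {0..})) \<longrightarrow>
          (\<forall>t\<ge>0. norm (S t) \<le> M * exp (- c * t) * norm (S 0))))"

definition Pi11 :: "nat \<Rightarrow> (nat \<Rightarrow> real^'n^'n) \<Rightarrow> real^'n^'n \<Rightarrow> real^'n^'n" where
  "Pi11 r A0 X = (\<Sum>i\<in>{1..r}. transpose (A0 i) ** X ** A0 i)"

definition Pi12 :: "nat \<Rightarrow> (nat \<Rightarrow> real^'n^'n) \<Rightarrow> (nat \<Rightarrow> real^'m^'n) \<Rightarrow> real^'n^'n \<Rightarrow> real^'m^'n" where
  "Pi12 r A0 B0 X = (\<Sum>i\<in>{1..r}. transpose (A0 i) ** X ** B0 i)"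

definition Pi22 :: "nat \<Rightarrow> (nat \<Rightarrow> real^'m^'n) \<Rightarrow> real^'n^'n \<Rightarrow> real^'m^'m" where
  "Pi22 r B0 X = (\<Sum>i\<in>{1..r}. transpose (B0 i) ** X ** B0 i)"

definition PiM :: "nat \<Rightarrow> (nat \<Rightarrow> real^'n^'n) \<Rightarrow> (nat \<Rightarrow> real^'m^'n) \<Rightarrow> real^'n^'n
     \<Rightarrow> real^('n + 'm)^('n + 'm)" where
  "PiM r A0 B0 X = blockm (Pi11 r A0 X) (Pi12 r A0 B0 X) (transpose (Pi12 r A0 B0 X)) (Pi22 r B0 X)"

definition Lc :: "real^'m^'n \<Rightarrow> nat \<Rightarrow> (nat \<Rightarrow> real^'n^'n) \<Rightarrow> (nat \<Rightarrow> real^'m^'n) \<Rightarrow> real^'n^'n \<Rightarrow> real^'m^'n" where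
  "Lc L r A0 B0 X = L + Pi12 r A0 B0 X"

definition Rc :: "real^'m^'m \<Rightarrow> nat \<Rightarrow> (nat \<Rightarrow> real^'m^'n) \<Rightarrow> real^'n^'n \<Rightarrow> real^'m^'m" where
  "Rc R r B0 X = R + Pi22 r B0 X"

definition Ac :: "real^'n^'n \<Rightarrow> real^'m^'n \<Rightarrow> real^'m^'n \<Rightarrow> real^'m^'m \<Rightarrow> nat
     \<Rightarrow> (nat \<Rightarrow> real^'n^'n) \<Rightarrow> (nat \<Rightarrow> real^'m^'n) \<Rightarrow> real^'n^'n \<Rightarrow> real^'n^'n" where
  "Ac A B L R r A0 B0 X = A - B ** matrix_inv (Rc R r B0 X) ** transpose (Lc L r A0 B0 X)"

definition Gc :: "real^'m^'n \<Rightarrow> real^'m^'m \<Rightarrow> nat \<Rightarrow> (nat \<Rightarrow> real^'m^'n) \<Rightarrow> real^'n^'n \<Rightarrow> real^'n^'n" where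
  "Gc B R r B0 X = B ** matrix_inv (Rc R r B0 X) ** transpose B"

definition Ric :: "real^'n^'n \<Rightarrow> real^'m^'n \<Rightarrow> real^'n^'n \<Rightarrow> real^'m^'n \<Rightarrow> real^'m^'m \<Rightarrow> nat
     \<Rightarrow> (nat \<Rightarrow> real^'n^'n) \<Rightarrow> (nat \<Rightarrow> real^'m^'n) \<Rightarrow> real^'n^'n \<Rightarrow> real^'n^'n" where
  "Ric A B Q L R r A0 B0 X =
     transpose A ** X + X ** A + Q + Pi11 r A0 X
     - (X ** B + L + Pi12 r A0 B0 X) ** matrix_inv (R + Pi22 r B0 X) ** transpose (X ** B + L + Pi12 r A0 B0 X)"

end

theory Submission
  imports Defs "Jordan_Normal_Form.Spectral_Radius"
begin

no_notation Matrix.vec_index (infixl "$" 100)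
no_notation Matrix.scalar_prod (infix "\<bullet>" 70)


definition idx :: "nat \<Rightarrow> 'n::finite" where
  "idx = (SOME h. bij_betw h {0..<CARD('n)} (UNIV::'n set))"

lemma idx_bij: "bij_betw (idx::nat \<Rightarrow> 'n::finite) {0..<CARD('n)} UNIV"
proof -
  have "\<exists>h. bij_betw h {0..<CARD('n)} (UNIV::'n set)"
    using ex_bij_betw_nat_finite[of "UNIV::'n set"] by simp
  then show ?thesis unfolding idx_def by (rule someI_ex)
qed

lemma idx_surj: "\<exists>i<CARD('n). idx i = (l::'n::finite)"
proof -
  have "l \<in> idx ` {0..<CARD('n)}" using idx_bij[where 'n='n] unfolding bij_betw_def by simp
  then show ?thesis by auto
qed

lemma idx_inj: "i < CARD('n) \<Longrightarrow> j < CARD('n) \<Longrightarrow> (idx i = (idx j :: 'n::finite)) = (i = j)"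
  using idx_bij[where 'n='n] unfolding bij_betw_def inj_on_def by auto

definition toM :: "complex^'n^'n \<Rightarrow> complex mat" where
  "toM M = Matrix.mat CARD('n) CARD('n) (\<lambda>(i,j). M $ idx i $ idx j)"

lemma toM_dim[simp]: "dim_row (toM (M::complex^'n^'n)) = CARD('n)" "dim_col (toM M) = CARD('n)"
  by (auto simp: toM_def)

lemma toM_carrier: "toM (M::complex^'n^'n) \<in> carrier_mat CARD('n) CARD('n)"
  unfolding toM_def by simp

lemma sum_idx: "(\<Sum>k\<in>{0..<CARD('n)}. f (idx k :: 'n::finite)) = (\<Sum>l\<in>UNIV. f l)"
  using sum.reindex_bij_betw[OF idx_bij, of f] by simp

lemma toM_mult: "toM ((M::complex^'n^'n) ** N) = toM M * toM N"
proof (rule eq_matI)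
  fix i j assume i: "i < dim_row (toM M * toM N)" and j: "j < dim_col (toM M * toM N)"
  then have i': "i < CARD('n)" and j': "j < CARD('n)" by (auto simp: toM_def)
  have "(toM M * toM N) $$ (i,j) = (\<Sum>k\<in>{0..<CARD('n)}. M $ idx i $ idx k * N $ idx k $ idx j)"
    using i' j' by (simp add: toM_def scalar_prod_def)
  also have "\<dots> = (\<Sum>l\<in>UNIV. M $ idx i $ l * N $ l $ idx j)"
    by (rule sum_idx)
  finally show "toM (M ** N) $$ (i,j) = (toM M * toM N) $$ (i,j)"
    using i' j' by (simp add: toM_def matrix_matrix_mult_def)
qed (auto simp: toM_def)

lemma toM_one: "toM (Finite_Cartesian_Product.mat 1 :: complex^'n^'n) = 1\<^sub>m CARD('n)"
  by (rule eq_matI) (auto simp: toM_def Finite_Cartesian_Product.mat_def idx_inj)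

fun mpow :: "'a::semiring_1^'n^'n \<Rightarrow> nat \<Rightarrow> 'a^'n^'n" where
  "mpow M 0 = Finite_Cartesian_Product.mat 1"
| "mpow M (Suc k) = mpow M k ** M"

lemma toM_pow: "toM (mpow M k) = toM M ^\<^sub>m k"
  by (induction k) (auto simp: toM_one toM_mult)

definition wof :: "complex vec \<Rightarrow> complex^'n::finite" where
  "wof v = (\<chi> l. vec_index v (inv_into {0..<CARD('n)} idx l))"

lemma wof_idx: "i < CARD('n) \<Longrightarrow> (wof v :: complex^'n::finite) $ idx i = vec_index v i"
  unfolding wof_def using idx_bij[where 'n='n] by (simp add: bij_betw_def)

lemma toM_mult_vec: "i < CARD('n) \<Longrightarrow> vec_index (toM M *\<^sub>v v) i = (M *v (wof v :: complex^'n::finite)) $ idx i"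
  if "v \<in> carrier_vec CARD('n)"
proof -
  assume i: "i < CARD('n)"
  have "vec_index (toM M *\<^sub>v v) i = (\<Sum>k\<in>{0..<CARD('n)}. M $ idx i $ idx k * (wof v :: complex^'n) $ idx k)"
    using i that by (simp add: toM_def scalar_prod_def wof_idx)
  also have "\<dots> = (\<Sum>l\<in>UNIV. M $ idx i $ l * (wof v :: complex^'n) $ l)"
    by (rule sum_idx)
  finally show ?thesis by (simp add: matrix_vector_mult_def)
qed

lemma eig_toM_vec:
  assumes "eigenvector (toM (M::complex^'n::finite^'n)) v z"
  shows "(wof v :: complex^'n) \<noteq> 0 \<and> M *v (wof v :: complex^'n) = z *s (wof v :: complex^'n)"
proof -
  have v: "v \<in> carrier_vec CARD('n)" "v \<noteq> 0\<^sub>v CARD('n)" "toM M *\<^sub>v v = z \<cdot>\<^sub>v v"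
    using assms unfolding eigenvector_def by auto
  obtain i where i: "i < CARD('n)" "vec_index v i \<noteq> 0"
    using v(1,2) by (metis carrier_vecD eq_vecI index_zero_vec(1) index_zero_vec(2))
  have "(wof v :: complex^'n) $ idx i \<noteq> 0" using i wof_idx by metis
  then have "wof v \<noteq> (0::complex^'n)" by auto
  moreover have "M *v (wof v :: complex^'n) = z *s wof v"
  proof (subst Finite_Cartesian_Product.vec_eq_iff, intro allI)
    fix l :: 'n
    obtain j where j: "j < CARD('n)" "idx j = l" using idx_surj by blast
    have "(M *v (wof v :: complex^'n)) $ idx j = vec_index (toM M *\<^sub>v v) j"
      using toM_mult_vec[OF v(1) j(1)] by simp
    also have "\<dots> = z * vec_index v j" using v(3) v(1) j(1) by simp
    also have "\<dots> = (z *s (wof v :: complex^'n)) $ idx j" using wof_idx[OF j(1)] by simp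
    finally show "(M *v (wof v :: complex^'n)) $ l = (z *s (wof v :: complex^'n)) $ l" using j(2) by simp
  qed
  ultimately show ?thesis by blast
qed

lemma vec_eig_toM:
  assumes "w \<noteq> 0" "(M::complex^'n::finite^'n) *v w = z *s w"
  shows "eigenvector (toM M) (Matrix.vec CARD('n) (\<lambda>i. w $ idx i)) z"
proof -
  let ?v = "Matrix.vec CARD('n) (\<lambda>i. w $ idx i)"
  have wv: "wof ?v = w"
  proof (subst Finite_Cartesian_Product.vec_eq_iff, intro allI)
    fix l :: 'n
    obtain j where j: "j < CARD('n)" "idx j = l" using idx_surj by blast
    show "wof ?v $ l = w $ l" using wof_idx[OF j(1), of ?v] j by simp
  qed
  obtain l where "w $ l \<noteq> 0" using assms(1) by (metis Finite_Cartesian_Product.vec_eq_iff zero_index)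
  moreover obtain j where j: "j < CARD('n)" "idx j = l" using idx_surj by blast
  ultimately have "vec_index ?v j \<noteq> 0" by simp
  then have nz: "?v \<noteq> 0\<^sub>v CARD('n)" using j(1) by (metis index_zero_vec(1))
  have "toM M *\<^sub>v ?v = z \<cdot>\<^sub>v ?v"
  proof (rule eq_vecI)
    fix i assume "i < dim_vec (z \<cdot>\<^sub>v ?v)"
    then have i: "i < CARD('n)" by simp
    have "vec_index (toM M *\<^sub>v ?v) i = (M *v w) $ idx i"
      using toM_mult_vec[of ?v i M] i wv by simp
    then show "vec_index (toM M *\<^sub>v ?v) i = vec_index (z \<cdot>\<^sub>v ?v) i" using assms(2) i by simp
  qed simp
  then show ?thesis unfolding eigenvector_def using nz by simp
qed

lemma card_pos: "0 < CARD('n::finite)" by simp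

lemma eig_le_sr:
  assumes "w \<noteq> 0" "(M::complex^'n::finite^'n) *v w = z *s w"
  shows "norm z \<le> spectral_radius (toM M)"
proof -
  have "eigenvalue (toM M) z" using vec_eig_toM[OF assms] unfolding eigenvalue_def by blast
  then have "norm z \<in> norm ` spectrum (toM M)" unfolding spectrum_def by auto
  then show ?thesis using spectral_radius_mem_max(2)[OF toM_carrier card_pos] by blast
qed

lemma sr_is_eig: "\<exists>z w. w \<noteq> 0 \<and> (M::complex^'n::finite^'n) *v w = z *s w \<and> norm z = spectral_radius (toM M)"
proof -
  obtain z where "z \<in> spectrum (toM M)" "norm z = spectral_radius (toM M)"
    using spectral_radius_mem_max(1)[OF toM_carrier card_pos, of M] by auto
  then obtain v where "eigenvector (toM M) v z" unfolding spectrum_def eigenvalue_def by auto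
  from eig_toM_vec[OF this] show ?thesis using \<open>norm z = _\<close> by blast
qed

definition mdiv :: "complex^'n^'n \<Rightarrow> real \<Rightarrow> complex^'n^'n" where
  "mdiv M r = (\<chi> i j. M $ i $ j / of_real r)"

lemma mdiv_nth[simp]: "mdiv M r $ i $ j = M $ i $ j / of_real r"
  by (simp add: mdiv_def)

lemma mpow_mdiv: "mpow (mdiv M r) k $ i $ j = mpow M k $ i $ j / of_real r ^ k"
proof (induction k arbitrary: i j)
  case 0 then show ?case by (simp add: Finite_Cartesian_Product.mat_def)
next
  case (Suc k)
  have "mpow (mdiv M r) (Suc k) $ i $ j = (\<Sum>l\<in>UNIV. mpow (mdiv M r) k $ i $ l * mdiv M r $ l $ j)"
    by (simp add: matrix_matrix_mult_def)
  also have "\<dots> = (\<Sum>l\<in>UNIV. (mpow M k $ i $ l * M $ l $ j) / of_real r ^ Suc k)"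
    by (simp add: Suc mult.commute)
  also have "\<dots> = mpow M (Suc k) $ i $ j / of_real r ^ Suc k"
    by (simp add: matrix_matrix_mult_def sum_divide_distrib)
  finally show ?case .
qed

lemma mdiv_eig: assumes "r \<noteq> 0" "mdiv M r *v w = z *s w" shows "M *v w = (of_real r * z) *s w"
proof -
  have "(M *v w) $ i = ((of_real r * z) *s w) $ i" for i
  proof -
    have "(mdiv M r *v w) $ i = (M *v w) $ i / of_real r"
      by (simp add: matrix_vector_mult_def mdiv_def sum_divide_distrib)
    then show ?thesis using assms by (simp add: field_simps)
  qed
  then show ?thesis by (simp add: Finite_Cartesian_Product.vec_eq_iff)
qed

lemma pow_decay:
  fixes M :: "complex^'n::finite^'n"
  assumes "\<forall>z w. w \<noteq> 0 \<and> M *v w = z *s w \<longrightarrow> norm z < 1"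
  shows "\<exists>c r. 0 < r \<and> r < 1 \<and> (\<forall>k i j. norm (mpow M k $ i $ j) \<le> c * r^k)"
proof -
  define \<rho> where "\<rho> = spectral_radius (toM M)"
  have rho1: "\<rho> < 1" using sr_is_eig[of M] assms unfolding \<rho>_def by metis
  have rho0: "0 \<le> \<rho>" using sr_is_eig[of M] unfolding \<rho>_def by (metis norm_ge_zero)
  define r where "r = (1 + \<rho>) / 2"
  have r: "0 < r" "r < 1" "\<rho> < r" using rho0 rho1 by (auto simp: r_def)
  have "spectral_radius (toM (mdiv M r)) < 1"
  proof -
    obtain z w where zw: "w \<noteq> 0" "mdiv M r *v w = z *s w" "norm z = spectral_radius (toM (mdiv M r))"
      using sr_is_eig by blast
    have "M *v w = (of_real r * z) *s w" using mdiv_eig[OF _ zw(2)] r by simp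
    from eig_le_sr[OF zw(1) this] have "r * norm z \<le> \<rho>" using r unfolding \<rho>_def by (simp add: norm_mult)
    then have "norm z < 1" using r
      by (smt (verit, best) mult_less_cancel_left2)
    then show ?thesis using zw(3) by simp
  qed
  from spectral_radius_jnf_norm_bound_less_1_upper_triangular[OF toM_carrier this]
  obtain c where c: "\<forall>k. norm_bound (toM (mdiv M r) ^\<^sub>m k) c" by blast
  have "norm (mpow M k $ i $ j) \<le> c * r^k" for k i j
  proof -
    obtain a where a: "a < CARD('n)" "idx a = i" using idx_surj by blast
    obtain b where b: "b < CARD('n)" "idx b = j" using idx_surj by blast
    have "norm (toM (mpow (mdiv M r) k) $$ (a,b)) \<le> c"
      using c a b unfolding norm_bound_def toM_pow[symmetric] by simp
    then have "norm (mpow (mdiv M r) k $ i $ j) \<le> c" using a b by (simp add: toM_def)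
    then have "norm (mpow M k $ i $ j) / r^k \<le> c" using r by (simp add: mpow_mdiv norm_divide norm_power)
    then show ?thesis using r by (simp add: pos_divide_le_eq)
  qed
  then show ?thesis using r by blast
qed




definition cvec :: "real^'n \<Rightarrow> complex^'n" where
  "cvec x = (\<chi> i. complex_of_real (x $ i))"

lemma cmat_nth[simp]: "cmat M $ i $ j = complex_of_real (M $ i $ j)"
  by (simp add: cmat_def)
lemma cvec_nth[simp]: "cvec x $ i = complex_of_real (x $ i)"
  by (simp add: cvec_def)

lemma cmat_mult: "cmat ((A::real^'m^'n) ** (B::real^'k^'m)) = cmat A ** cmat B"
  by (simp add: Finite_Cartesian_Product.vec_eq_iff matrix_matrix_mult_def)
lemma cmat_add: "cmat (A + B) = cmat A + cmat B"
  by (simp add: Finite_Cartesian_Product.vec_eq_iff)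
lemma cmat_diff: "cmat (A - B) = cmat A - cmat B"
  by (simp add: Finite_Cartesian_Product.vec_eq_iff)
lemma cmat_one: "cmat (Finite_Cartesian_Product.mat 1 :: real^'n^'n) = Finite_Cartesian_Product.mat 1"
  by (simp add: Finite_Cartesian_Product.vec_eq_iff Finite_Cartesian_Product.mat_def)
lemma cmat_vec: "cmat A *v cvec x = cvec (A *v x)"
  by (simp add: Finite_Cartesian_Product.vec_eq_iff matrix_vector_mult_def)
lemma cvec_eq0: "(cvec x = 0) = (x = 0)"
  by (simp add: Finite_Cartesian_Product.vec_eq_iff)
lemma cmat_pow: "cmat (mpow B k) = mpow (cmat B) k"
  by (induction k) (simp_all add: cmat_one cmat_mult)

lemma inner_transpose: "(u::real^'n) \<bullet> (transpose A *v w) = (A *v u) \<bullet> w"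
proof -
  have "u \<bullet> (transpose A *v w) = (\<Sum>i\<in>UNIV. \<Sum>j\<in>UNIV. u$i * (A$j$i * w$j))"
    by (simp add: inner_vec_def matrix_vector_mult_def transpose_def sum_distrib_left)
  also have "\<dots> = (\<Sum>j\<in>UNIV. \<Sum>i\<in>UNIV. u$i * (A$j$i * w$j))" by (rule sum.swap)
  also have "\<dots> = (A *v u) \<bullet> w"
    by (simp add: inner_vec_def matrix_vector_mult_def sum_distrib_left mult_ac)
  finally show ?thesis .
qed
lemma real_pow_decay:
  fixes B :: "real^'n::finite^'n"
  assumes "\<forall>z w. w \<noteq> 0 \<and> cmat B *v w = z *s w \<longrightarrow> norm z < 1"
  shows "(\<lambda>k. mpow B k *v x) \<longlonglongrightarrow> 0"
proof -
  obtain c r where cr: "0 < r" "r < 1" "\<forall>k i j. norm (mpow (cmat B) k $ i $ j) \<le> c * r^k"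
    using pow_decay[OF assms] by blast
  have ent: "(\<lambda>k. mpow B k $ i $ j) \<longlonglongrightarrow> 0" for i j
  proof (rule Lim_null_comparison)
    show "\<forall>\<^sub>F k in sequentially. norm (mpow B k $ i $ j) \<le> c * r^k"
      using cr(3) by (simp add: cmat_pow[symmetric])
    show "(\<lambda>k. c * r^k) \<longlonglongrightarrow> 0"
      using cr by (intro tendsto_mult_right_zero LIMSEQ_power_zero) auto
  qed
  show ?thesis
  proof (rule vec_tendstoI)
    fix i
    have "(\<lambda>k. \<Sum>j\<in>UNIV. mpow B k $ i $ j * x $ j) \<longlonglongrightarrow> (\<Sum>j\<in>(UNIV::'n set). 0 * x $ j)"
      by (intro tendsto_sum tendsto_mult ent tendsto_const)
    then show "(\<lambda>k. (mpow B k *v x) $ i) \<longlonglongrightarrow> (0::real^'n) $ i"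
      by (simp add: matrix_vector_mult_def)
  qed
qed

lemma cayley_eig:
  fixes A C :: "real^'n::finite^'n"
  assumes hur: "hurwitz A"
    and IC: "(Finite_Cartesian_Product.mat 1 - A) ** C = Finite_Cartesian_Product.mat 1"
    and v: "v \<noteq> 0" "cmat ((Finite_Cartesian_Product.mat 1 + A) ** C) *v v = \<mu> *s v"
  shows "norm \<mu> < 1"
proof -
  define w where "w = cmat C *v v"
  define a where "a = cmat A *v w"
  have "cmat (Finite_Cartesian_Product.mat 1 - A) *v w = v"
    using IC unfolding w_def
    by (metis cmat_mult matrix_vector_mul_assoc matrix_vector_mul_lid cmat_one)
  then have e1: "w - a = v"
    by (simp add: a_def cmat_diff cmat_one matrix_vector_mult_diff_rdistrib)
  have "cmat (Finite_Cartesian_Product.mat 1 + A) *v w = \<mu> *s v"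
    using v(2) unfolding w_def by (simp add: cmat_mult matrix_vector_mul_assoc)
  then have e2: "w + a = \<mu> *s v"
    by (simp add: a_def cmat_add cmat_one matrix_vector_mult_add_rdistrib)
  have wnz: "w \<noteq> 0" using e1 v(1) a_def by auto
  have mu: "\<mu> \<noteq> -1"
  proof
    assume "\<mu> = -1"
    have "w $ i = 0" for i
    proof -
      have "w $ i - a $ i = v $ i" "w $ i + a $ i = - v $ i"
        using e1 e2 \<open>\<mu> = -1\<close> by (auto simp: Finite_Cartesian_Product.vec_eq_iff)
      then have "(w $ i - a $ i) + (w $ i + a $ i) = 0" by simp
      moreover have "(w $ i - a $ i) + (w $ i + a $ i) = 2 * w $ i" by (simp add: mult_2 algebra_simps)
      ultimately show ?thesis by simp
    qed
    then have "w = 0" by (simp add: Finite_Cartesian_Product.vec_eq_iff)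
    then show False using wnz by simp
  qed
  have "cmat A *v w = ((\<mu> - 1) / (\<mu> + 1)) *s w"
  proof (subst Finite_Cartesian_Product.vec_eq_iff, intro allI)
    fix i
    have "w $ i + a $ i = \<mu> * (w $ i - a $ i)"
      using e1 e2 by (auto simp: Finite_Cartesian_Product.vec_eq_iff)
    then have "a $ i * (\<mu> + 1) = (\<mu> - 1) * w $ i" by (simp add: algebra_simps)
    moreover have "\<mu> + 1 \<noteq> 0" using mu eq_neg_iff_add_eq_0[of \<mu> 1] by blast
    ultimately have "a $ i = (\<mu> - 1) / (\<mu> + 1) * w $ i" by (simp add: field_simps)
    then show "(cmat A *v w) $ i = (((\<mu> - 1) / (\<mu> + 1)) *s w) $ i" by (simp add: a_def)
  qed
  then have "Re ((\<mu> - 1) / (\<mu> + 1)) < 0"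
    using hur[unfolded hurwitz_def, rule_format, OF conjI[OF wnz]] by simp
  then have "Re ((\<mu> - 1) * cnj (\<mu> + 1)) < 0" by (simp add: Re_complex_div_lt_0)
  then have "(Re \<mu>)^2 + (Im \<mu>)^2 < 1" by (simp add: power2_eq_square algebra_simps)
  then show ?thesis unfolding cmod_def by simp
qed

lemma lyap_psd:
  fixes A D :: "real^'n::finite^'n"
  assumes hur: "hurwitz A" and sym: "transpose D = D"
    and neg: "\<forall>x. x \<bullet> ((transpose A ** D + D ** A) *v x) \<le> 0"
  shows "psd D"
proof -
  let ?I = "Finite_Cartesian_Product.mat 1 :: real^'n^'n"
  have inj: "\<forall>x. (?I - A) *v x = 0 \<longrightarrow> x = 0"
  proof (intro allI impI, rule ccontr)
    fix x assume x0: "(?I - A) *v x = 0" and "x \<noteq> 0"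
    then have "cvec x \<noteq> 0" by (simp add: cvec_eq0)
    moreover have "A *v x = x" using x0 by (simp add: matrix_vector_mult_diff_rdistrib)
    then have "cmat A *v cvec x = (1::complex) *s cvec x" by (simp add: cmat_vec)
    ultimately have "Re (1::complex) < 0"
      using hur[unfolded hurwitz_def, rule_format, of "cvec x" 1] by simp
    then show False by simp
  qed
  then obtain C where "C ** (?I - A) = ?I" using matrix_left_invertible_ker by blast
  then have IC: "(?I - A) ** C = ?I" using matrix_left_right_inverse by blast
  define B where "B = (?I + A) ** C"
  have eig: "\<forall>z w. w \<noteq> 0 \<and> cmat B *v w = z *s w \<longrightarrow> norm z < 1"
    using cayley_eig[OF hur IC] unfolding B_def by blast
  define V where "V = (\<lambda>x::real^'n. x \<bullet> (D *v x))"
  have step: "V (B *v x) \<le> V x" for x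
  proof -
    define u where "u = C *v x"
    define a where "a = A *v u"
    have xu: "x = u - a" using IC unfolding u_def a_def
      by (metis matrix_vector_mul_assoc matrix_vector_mul_lid matrix_vector_mult_diff_rdistrib)
    have bu: "B *v x = u + a" unfolding B_def u_def a_def
      by (simp add: matrix_vector_mul_assoc[symmetric] matrix_vector_mult_add_rdistrib)
    have "(transpose A ** D + D ** A) *v u = transpose A *v (D *v u) + D *v (A *v u)"
      by (simp only: matrix_vector_mult_add_rdistrib matrix_vector_mul_assoc)
    then have "u \<bullet> ((transpose A ** D + D ** A) *v u) = a \<bullet> (D *v u) + u \<bullet> (D *v a)"
      unfolding a_def by (simp only: inner_add_right inner_transpose)
    then have "a \<bullet> (D *v u) + u \<bullet> (D *v a) \<le> 0" using neg by metis
    moreover have "V (u + a) - V (u - a) = 2 * (a \<bullet> (D *v u) + u \<bullet> (D *v a))"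
      unfolding V_def
      by (simp only: matrix_vector_right_distrib matrix_vector_mult_diff_distrib inner_add_left
          inner_add_right inner_diff_left inner_diff_right) (simp add: algebra_simps)
    ultimately show ?thesis using xu bu by simp
  qed
  have mono: "V (mpow B k *v x) \<le> V x" for k x
  proof (induction k arbitrary: x)
    case 0 then show ?case by simp
  next
    case (Suc k)
    have "V (mpow B (Suc k) *v x) = V (mpow B k *v (B *v x))"
      by (simp add: matrix_vector_mul_assoc)
    also have "\<dots> \<le> V (B *v x)" by (rule Suc)
    also have "\<dots> \<le> V x" by (rule step)
    finally show ?case .
  qed
  have "\<forall>x. 0 \<le> V x"
  proof
    fix x
    have lim: "(\<lambda>k. mpow B k *v x) \<longlonglongrightarrow> 0" by (rule real_pow_decay[OF eig])
    have "(\<lambda>k. V (mpow B k *v x)) \<longlonglongrightarrow> 0 \<bullet> (D *v 0)"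
      unfolding V_def
      by (intro tendsto_inner lim bounded_linear.tendsto[OF matrix_vector_mul_bounded_linear])
    then have "(\<lambda>k. V (mpow B k *v x)) \<longlonglongrightarrow> 0" by simp
    then show "0 \<le> V x" using mono by (intro LIMSEQ_le_const2) auto
  qed
  then show ?thesis unfolding psd_def V_def using sym by simp
qed




lemma tr_add: "transpose (A + B) = transpose A + transpose (B::'a::semiring_1^'n^'m)"
  by (simp add: Finite_Cartesian_Product.vec_eq_iff transpose_def)
lemma tr_diff: "transpose (A - B) = transpose A - transpose (B::'a::ring_1^'n^'m)"
  by (simp add: Finite_Cartesian_Product.vec_eq_iff transpose_def)
lemma tr_neg: "transpose (- A) = - transpose (A::'a::ring_1^'n^'m)"
  by (simp add: Finite_Cartesian_Product.vec_eq_iff transpose_def)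
lemma tr_zero: "transpose 0 = (0::'a::semiring_1^'n^'m)"
  by (simp add: Finite_Cartesian_Product.vec_eq_iff transpose_def)
lemma mm_diff_l: "(A::'a::ring_1^'n^'m) ** (B - C) = A ** B - A ** C"
  by (simp add: Finite_Cartesian_Product.vec_eq_iff matrix_matrix_mult_def algebra_simps sum_subtractf)
lemma mm_diff_r: "((B::'a::ring_1^'n^'m) - C) ** A = B ** A - C ** A"
  by (simp add: Finite_Cartesian_Product.vec_eq_iff matrix_matrix_mult_def algebra_simps sum_subtractf)
lemma mm_neg_l: "(- A::'a::ring_1^'n^'m) ** B = - (A ** B)"
  by (simp add: Finite_Cartesian_Product.vec_eq_iff matrix_matrix_mult_def sum_negf)
lemma mm_neg_r: "(A::'a::ring_1^'n^'m) ** (- B) = - (A ** B)"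
  by (simp add: Finite_Cartesian_Product.vec_eq_iff matrix_matrix_mult_def sum_negf)
lemma mm_add_r: "((B::'a::semiring_1^'n^'m) + C) ** A = B ** A + C ** A"
  by (simp add: Finite_Cartesian_Product.vec_eq_iff matrix_matrix_mult_def algebra_simps sum.distrib)
lemma mm_zero_l: "(0::'a::ring_1^'n^'m) ** B = 0"
  by (simp add: Finite_Cartesian_Product.vec_eq_iff matrix_matrix_mult_def)
lemma mm_zero_r: "(A::'a::ring_1^'n^'m) ** 0 = 0"
  by (simp add: Finite_Cartesian_Product.vec_eq_iff matrix_matrix_mult_def)

lemmas mat_simps = tr_add tr_diff tr_neg tr_zero mm_diff_l mm_diff_r mm_neg_l mm_neg_r mm_zero_l mm_zero_r
  matrix_add_ldistrib mm_add_r matrix_mul_assoc[symmetric] matrix_transpose_mul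
  transpose_transpose matrix_mul_lid matrix_mul_rid

lemma ric_core:
  fixes A X Q P11 :: "real^'n^'n" and B L P12 :: "real^'m^'n" and Rc G :: "real^'m^'m"
    and F :: "real^'n^'m"
  assumes X: "transpose X = X" and G1: "Rc ** G = Finite_Cartesian_Product.mat 1"
    and G2: "G ** Rc = Finite_Cartesian_Product.mat 1" and Gs: "transpose G = G"
  defines "S \<equiv> X ** B + L + P12"
  shows "transpose (A + B ** F) ** X + X ** (A + B ** F) + P11 + P12 ** F + transpose F ** transpose P12
      + Q + L ** F + transpose F ** transpose L + transpose F ** Rc ** F
    = (transpose A ** X + X ** A + Q + P11 - S ** G ** transpose S)
      + transpose (F + G ** transpose S) ** Rc ** (F + G ** transpose S)"
proof -
  have G1': "Rc ** (G ** Y) = Y" for Y :: "real^'k^'m"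
    by (simp add: matrix_mul_assoc G1)
  have G2': "G ** (Rc ** Y) = Y" for Y :: "real^'k^'m"
    by (simp add: matrix_mul_assoc G2)
  show ?thesis unfolding S_def
    by (simp add: mat_simps X Gs G1' G2' algebra_simps)
qed

lemma sum_mm_r: "finite I \<Longrightarrow> (sum f I) ** (A::'a::ring_1^'n^'m) = (\<Sum>i\<in>I. f i ** A)"
  by (induction I rule: finite_induct) (simp_all add: mm_zero_l mm_add_r)
lemma sum_mm_l: "finite I \<Longrightarrow> (A::'a::ring_1^'n^'m) ** (sum f I) = (\<Sum>i\<in>I. A ** f i)"
  by (induction I rule: finite_induct) (simp_all add: mm_zero_r matrix_add_ldistrib)
lemma tr_sum: "finite I \<Longrightarrow> transpose (sum f I) = (\<Sum>i\<in>I. transpose (f i :: 'a::ring_1^'n^'m))"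
  by (induction I rule: finite_induct) (simp_all add: tr_zero tr_add)

lemma inner_sym: "transpose M = M \<Longrightarrow> (u::real^'n) \<bullet> (M *v w) = w \<bullet> (M *v u)"
  by (metis inner_commute inner_transpose)

lemma psd_add: "psd A \<Longrightarrow> psd B \<Longrightarrow> psd (A + B)"
  unfolding psd_def by (simp add: tr_add matrix_vector_mult_add_rdistrib inner_add_right add_nonneg_nonneg)
lemma psd_zero: "psd 0"
  unfolding psd_def by (simp add: tr_zero)
lemma psd_sum: "finite I \<Longrightarrow> (\<And>i. i \<in> I \<Longrightarrow> psd (f i)) \<Longrightarrow> psd (sum f I)"
  by (induction I rule: finite_induct) (simp_all add: psd_zero psd_add)
lemma psd_cong: assumes "psd D" shows "psd (transpose M ** D ** M)"
proof -
  have sym: "transpose D = D" using assms unfolding psd_def by simp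
  have "transpose (transpose M ** D ** M) = transpose M ** D ** M"
    using sym by (simp add: matrix_transpose_mul matrix_mul_assoc)
  moreover have "x \<bullet> ((transpose M ** D ** M) *v x) = (M *v x) \<bullet> (D *v (M *v x))" for x
    by (simp only: matrix_vector_mul_assoc[symmetric] inner_transpose)
  ultimately show ?thesis using assms unfolding psd_def by simp
qed
lemma psd_cong': "psd D \<Longrightarrow> psd (transpose M ** (D ** M))"
  using psd_cong by (metis matrix_mul_assoc)
lemma psd_sym: "psd D \<Longrightarrow> transpose D = D" unfolding psd_def by simp
lemma psd_form: "psd D \<Longrightarrow> 0 \<le> x \<bullet> (D *v x)" unfolding psd_def by simp

lemma psd_quad_zero:
  assumes "psd M" "x \<bullet> (M *v x) = 0" shows "M *v x = 0"
proof -
  let ?y = "M *v x"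
  have sym: "transpose M = M" using assms(1) psd_sym by blast
  have q: "0 \<le> (x - t *\<^sub>R ?y) \<bullet> (M *v (x - t *\<^sub>R ?y))" for t using psd_form[OF assms(1)] by blast
  have e: "(x - t *\<^sub>R ?y) \<bullet> (M *v (x - t *\<^sub>R ?y)) = - 2 * t * (?y \<bullet> ?y) + t^2 * (?y \<bullet> (M *v ?y))" for t
  proof -
    have "x \<bullet> (M *v ?y) = ?y \<bullet> ?y" using inner_sym[OF sym, of x ?y] by simp
    then show ?thesis using assms(2)
      by (simp add: matrix_vector_mult_diff_distrib inner_diff_left inner_diff_right
          matrix_vector_mult_scaleR power2_eq_square algebra_simps)
  qed
  define c where "c = ?y \<bullet> (M *v ?y)"
  define d where "d = ?y \<bullet> ?y"
  have c0: "0 \<le> c" using psd_form[OF assms(1)] c_def by blast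
  have t: "\<And>t. 0 \<le> - 2 * t * d + t^2 * c" using q e c_def d_def by metis
  define e where "e = c + 1"
  have e0: "0 < e" using c0 e_def by simp
  from t[of "d / e"] have h: "0 \<le> - 2 * (d / e) * d + (d / e)^2 * c" .
  have "- 2 * (d / e) * d + (d / e)^2 * c = d * d * (c - 2 * e) / e^2"
    using e0 by (simp add: field_simps power2_eq_square)
  with h have "0 \<le> d * d * (c - 2 * e) / e^2" by simp
  then have "0 \<le> d * d * (c - 2 * e)" using e0 by (simp add: zero_le_divide_iff)
  moreover have "c - 2 * e < 0" using c0 e_def by simp
  ultimately have "d * d \<le> 0" by (simp add: zero_le_mult_iff)
  then have "d = 0" by (auto simp: mult_le_0_iff)
  then show ?thesis unfolding d_def by simp
qed

lemma pd_inj: "pd M \<Longrightarrow> M *v x = 0 \<Longrightarrow> x = 0"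
  unfolding pd_def by force

lemma inv_unique:
  assumes "M ** G = Finite_Cartesian_Product.mat 1" "G ** M = Finite_Cartesian_Product.mat 1"
  shows "matrix_inv M = G"
proof -
  have "\<exists>G'. M ** G' = Finite_Cartesian_Product.mat 1 \<and> G' ** M = Finite_Cartesian_Product.mat 1"
    using assms by blast
  then have h: "M ** matrix_inv M = Finite_Cartesian_Product.mat 1 \<and> matrix_inv M ** M = Finite_Cartesian_Product.mat 1"
    unfolding matrix_inv_def by (rule someI_ex)
  have "matrix_inv M = matrix_inv M ** (M ** G)" using assms(1) by simp
  also have "\<dots> = G" using h by (simp add: matrix_mul_assoc)
  finally show ?thesis .
qed

lemma pd_inverse:
  fixes M :: "real^'n^'n"
  assumes "pd M"
  shows "M ** matrix_inv M = Finite_Cartesian_Product.mat 1" "matrix_inv M ** M = Finite_Cartesian_Product.mat 1"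
    "transpose (matrix_inv M) = matrix_inv M"
proof -
  obtain G where G1: "G ** M = Finite_Cartesian_Product.mat 1"
    using matrix_left_invertible_ker[of M] pd_inj[OF assms] by blast
  have G2: "M ** G = Finite_Cartesian_Product.mat 1" using G1 matrix_left_right_inverse by blast
  have MG: "matrix_inv M = G" by (rule inv_unique[OF G2 G1])
  have sym: "transpose M = M" using assms unfolding pd_def by simp
  have "transpose G ** M = Finite_Cartesian_Product.mat 1"
    using arg_cong[OF G2, of transpose] sym by (simp add: matrix_transpose_mul)
  then have "transpose G = transpose G ** (M ** G)" using G2 by simp
  also have "\<dots> = G" using \<open>transpose G ** M = _\<close> by (simp add: matrix_mul_assoc)
  finally show "transpose (matrix_inv M) = matrix_inv M" using MG by simp
  show "M ** matrix_inv M = Finite_Cartesian_Product.mat 1" "matrix_inv M ** M = Finite_Cartesian_Product.mat 1"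
    using MG G1 G2 by auto
qed

lemma pd_add_psd: "pd R \<Longrightarrow> psd P \<Longrightarrow> pd (R + P)"
  unfolding pd_def psd_def
  by (simp add: tr_add matrix_vector_mult_add_rdistrib inner_add_right add_pos_nonneg)

lemma pd_psd: "pd R \<Longrightarrow> psd R"
  unfolding pd_def psd_def by (metis inner_zero_left less_le order_refl matrix_vector_mult_0_right)




lemma sum_UNIV_plus: "sum f (UNIV::('a::finite + 'b::finite) set) = (\<Sum>a\<in>UNIV. f (Inl a)) + (\<Sum>b\<in>UNIV. f (Inr b))"
  by (simp add: UNIV_Plus_UNIV[symmetric] sum.Plus o_def del: UNIV_Plus_UNIV)

lemma blk_quad:
  fixes U U' :: "real^'k^'a" and V V' :: "real^'k^'c"
  shows "transpose (vstack U V) ** blockm M11 M12 M21 M22 ** vstack U' V'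
    = transpose U ** M11 ** U' + transpose U ** M12 ** V' + transpose V ** M21 ** U' + transpose V ** M22 ** V'"
  by (simp add: Finite_Cartesian_Product.vec_eq_iff matrix_matrix_mult_def transpose_def vstack_def blockm_def
      sum_UNIV_plus sum.distrib distrib_right sum_distrib_right)

lemma blk_vec:
  fixes U :: "real^'k^'a" and V :: "real^'k^'c"
  shows "(blockm M11 M12 M21 M22 *v (vstack U V *v x)) $ Inl i = (M11 *v (U *v x) + M12 *v (V *v x)) $ i"
    "(blockm M11 M12 M21 M22 *v (vstack U V *v x)) $ Inr j = (M21 *v (U *v x) + M22 *v (V *v x)) $ j"
  by (simp_all add: matrix_vector_mult_def vstack_def blockm_def sum_UNIV_plus)

lemma quad_cong: fixes x :: "real^'n" and P :: "real^'n^'k" shows "x \<bullet> ((transpose P ** M ** P) *v x) = (P *v x) \<bullet> (M *v (P *v x))"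
  by (simp only: matrix_vector_mul_assoc[symmetric] inner_transpose)

definition PiF :: "nat \<Rightarrow> (nat \<Rightarrow> real^'n^'n) \<Rightarrow> (nat \<Rightarrow> real^'m^'n) \<Rightarrow> real^'n^'m \<Rightarrow> real^'n^'n \<Rightarrow> real^'n^'n" where
  "PiF r A0 B0 F Y = Pi11 r A0 Y + Pi12 r A0 B0 Y ** F + transpose F ** transpose (Pi12 r A0 B0 Y)
     + transpose F ** Pi22 r B0 Y ** F"

definition MF :: "real^'n^'n \<Rightarrow> real^'m^'n \<Rightarrow> real^'m^'m \<Rightarrow> real^'n^'m \<Rightarrow> real^'n^'n" where
  "MF Q L R F = Q + L ** F + transpose F ** transpose L + transpose F ** R ** F"

definition Lyap :: "real^'n^'n \<Rightarrow> real^'m^'n \<Rightarrow> real^'n^'m \<Rightarrow> real^'n^'n \<Rightarrow> real^'n^'n" where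
  "Lyap A B F Y = transpose (A + B ** F) ** Y + Y ** (A + B ** F)"

lemma PiF_sum:
  assumes "transpose Y = Y"
  shows "PiF r A0 B0 F Y = (\<Sum>i\<in>{1..r}. transpose (A0 i + B0 i ** F) ** Y ** (A0 i + B0 i ** F))"
  unfolding PiF_def Pi11_def Pi12_def Pi22_def
  by (simp add: sum_mm_l sum_mm_r tr_sum mat_simps sum.distrib assms add_ac)

lemma PiF_psd: "psd Y \<Longrightarrow> psd (PiF r A0 B0 F Y)"
  by (simp add: PiF_sum psd_sym psd_sum psd_cong)

lemma Pi22_psd: "psd Y \<Longrightarrow> psd (Pi22 r B0 Y)"
  unfolding Pi22_def by (simp add: psd_sum psd_cong)

lemma Pi_diff:
  "Pi11 r A0 (Y - Z) = Pi11 r A0 Y - Pi11 r A0 Z"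
  "Pi12 r A0 B0 (Y - Z) = Pi12 r A0 B0 Y - Pi12 r A0 B0 Z"
  "Pi22 r B0 (Y - Z) = Pi22 r B0 Y - Pi22 r B0 Z"
  unfolding Pi11_def Pi12_def Pi22_def by (simp_all add: mat_simps sum_subtractf)

lemma PiF_diff: "PiF r A0 B0 F (Y - Z) = PiF r A0 B0 F Y - PiF r A0 B0 F Z"
  unfolding PiF_def Pi_diff by (simp add: mat_simps algebra_simps)

lemma Lyap_diff: "Lyap A B F (Y - Z) = Lyap A B F Y - Lyap A B F Z"
  unfolding Lyap_def by (simp add: mat_simps algebra_simps)

lemma ident:
  fixes A Y Q :: "real^'n^'n" and B L :: "real^'m^'n" and R :: "real^'m^'m" and F :: "real^'n^'m"
    and r :: nat and Az :: "nat \<Rightarrow> real^'n^'n" and Bz :: "nat \<Rightarrow> real^'m^'n"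
  assumes Y: "psd Y" and R: "pd R"
  defines "Rcy \<equiv> R + Pi22 r Bz Y"
  defines "Ky \<equiv> matrix_inv Rcy ** transpose (Y ** B + L + Pi12 r Az Bz Y)"
  shows "Lyap A B F Y + PiF r Az Bz F Y + MF Q L R F
       = Ric A B Q L R r Az Bz Y + transpose (F + Ky) ** Rcy ** (F + Ky)"
proof -
  have pdRc: "pd Rcy" unfolding Rcy_def using pd_add_psd[OF R Pi22_psd[of Y r Bz, OF Y]] .
  note inv = pd_inverse[OF pdRc]
  have core: "transpose (A + B ** F) ** Y + Y ** (A + B ** F) + Pi11 r Az Y + Pi12 r Az Bz Y ** F
      + transpose F ** transpose (Pi12 r Az Bz Y)
      + Q + L ** F + transpose F ** transpose L + transpose F ** Rcy ** F
    = (transpose A ** Y + Y ** A + Q + Pi11 r Az Y - (Y ** B + L + Pi12 r Az Bz Y) ** matrix_inv Rcy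
         ** transpose (Y ** B + L + Pi12 r Az Bz Y))
      + transpose (F + Ky) ** Rcy ** (F + Ky)"
    unfolding Ky_def by (rule ric_core[OF psd_sym[OF Y] inv(1) inv(2) inv(3)])
  have "Lyap A B F Y + PiF r Az Bz F Y + MF Q L R F = transpose (A + B ** F) ** Y + Y ** (A + B ** F) + Pi11 r Az Y + Pi12 r Az Bz Y ** F
      + transpose F ** transpose (Pi12 r Az Bz Y)
      + Q + L ** F + transpose F ** transpose L + transpose F ** Rcy ** F"
    unfolding Lyap_def PiF_def MF_def Rcy_def by (simp add: mat_simps add_ac)
  also note core
  finally show ?thesis unfolding Ric_def Rcy_def by simp
qed

lemma MF_blk: "MF Q L R F = transpose (vstack (Finite_Cartesian_Product.mat 1) F) ** blockm Q L (transpose L) R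
     ** vstack (Finite_Cartesian_Product.mat 1) F"
  unfolding blk_quad MF_def by (simp add: transpose_mat)

lemma MF_psd: "psd (blockm Q L (transpose L) R) \<Longrightarrow> psd (MF Q L R F)"
  unfolding MF_blk by (rule psd_cong)

lemma cvec_zero: "cvec 0 = 0"
  by (simp add: Finite_Cartesian_Product.vec_eq_iff)

lemma cvec_split: "v = cvec (\<chi> i. Re (v$i)) + \<i> *s cvec (\<chi> i. Im (v$i))"
  by (simp add: Finite_Cartesian_Product.vec_eq_iff complex_eq_iff)

lemma mv_scal: "(A::'a::comm_ring_1^'n^'m) *v (c *s x) = c *s (A *v x)"
  by (simp add: Finite_Cartesian_Product.vec_eq_iff matrix_vector_mult_def sum_distrib_left mult_ac)

lemma cmat_split: "cmat N *v (cvec a + \<i> *s cvec b) = cvec (N *v a) + \<i> *s cvec (N *v b)"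
  by (simp add: matrix_vector_right_distrib mv_scal cmat_vec)

lemma re_eq:
  fixes M :: "real^'n^'n"
  assumes "cmat M *v v = z *s v"
  shows "M *v (\<chi> i. Re (v$i)) = Re z *\<^sub>R (\<chi> i. Re (v$i)) - Im z *\<^sub>R (\<chi> i. Im (v$i))"
    "M *v (\<chi> i. Im (v$i)) = Im z *\<^sub>R (\<chi> i. Re (v$i)) + Re z *\<^sub>R (\<chi> i. Im (v$i))"
proof -
  have c: "(\<Sum>j\<in>UNIV. complex_of_real (M $ i $ j) * v $ j) = z * v $ i" for i
    using assms by (simp add: Finite_Cartesian_Product.vec_eq_iff matrix_vector_mult_def)
  have re: "(\<Sum>j\<in>UNIV. M $ i $ j * Re (v $ j)) = Re z * Re (v$i) - Im z * Im (v$i)" for i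
    using arg_cong[OF c[of i], of Re] by (simp add: Re_sum)
  have im: "(\<Sum>j\<in>UNIV. M $ i $ j * Im (v $ j)) = Im z * Re (v$i) + Re z * Im (v$i)" for i
    using arg_cong[OF c[of i], of Im] by (simp add: Im_sum)
  show "M *v (\<chi> i. Re (v$i)) = Re z *\<^sub>R (\<chi> i. Re (v$i)) - Im z *\<^sub>R (\<chi> i. Im (v$i))"
    using re by (simp add: Finite_Cartesian_Product.vec_eq_iff matrix_vector_mult_def)
  show "M *v (\<chi> i. Im (v$i)) = Im z *\<^sub>R (\<chi> i. Re (v$i)) + Re z *\<^sub>R (\<chi> i. Im (v$i))"
    using im by (simp add: Finite_Cartesian_Product.vec_eq_iff matrix_vector_mult_def)
qed

lemma lyap_form:
  fixes Y M :: "real^'n^'n"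
  assumes "transpose Y = Y"
  shows "x \<bullet> ((transpose M ** Y + Y ** M) *v x) = 2 * ((M *v x) \<bullet> (Y *v x))"
proof -
  have "x \<bullet> ((transpose M ** Y + Y ** M) *v x) = x \<bullet> (transpose M *v (Y *v x)) + x \<bullet> (Y *v (M *v x))"
    by (simp only: matrix_vector_mult_add_rdistrib matrix_vector_mul_assoc[symmetric] inner_add_right)
  also have "\<dots> = (M *v x) \<bullet> (Y *v x) + (M *v x) \<bullet> (Y *v x)"
    using inner_transpose inner_sym[OF assms] by metis
  finally show ?thesis by simp
qed

lemma mv_neg: "(A::'a::ring_1^'n^'m) *v (- x) = - (A *v x)"
  by (simp add: Finite_Cartesian_Product.vec_eq_iff matrix_vector_mult_def sum_negf)

lemma MF_zero:
  fixes Q :: "real^'n^'n" and L :: "real^'m^'n" and R :: "real^'m^'m" and F :: "real^'n^'m"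
  assumes Phi: "psd (blockm Q L (transpose L) R)" and R: "pd R"
    and nullsp: "\<forall>x. (Q - L ** matrix_inv R ** transpose L) *v x = 0 \<longrightarrow> transpose L *v x = 0"
    and q: "x \<bullet> (MF Q L R F *v x) = 0"
  shows "F *v x = 0" "(Q - L ** matrix_inv R ** transpose L) *v x = 0"
proof -
  let ?P = "vstack (Finite_Cartesian_Product.mat 1) F :: real^'n^('n+'m)"
  have "(?P *v x) \<bullet> (blockm Q L (transpose L) R *v (?P *v x)) = 0"
    using q unfolding MF_blk quad_cong .
  then have z: "blockm Q L (transpose L) R *v (?P *v x) = 0" by (rule psd_quad_zero[OF Phi])
  have e1: "Q *v x + L *v (F *v x) = 0"
  proof -
    have "(Q *v x + L *v (F *v x)) $ i = 0" for i
      using blk_vec(1)[of Q L "transpose L" R "Finite_Cartesian_Product.mat 1" F x i] z by simp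
    then show ?thesis by (simp add: Finite_Cartesian_Product.vec_eq_iff)
  qed
  have e2: "transpose L *v x + R *v (F *v x) = 0"
  proof -
    have "(transpose L *v x + R *v (F *v x)) $ i = 0" for i
      using blk_vec(2)[of Q L "transpose L" R "Finite_Cartesian_Product.mat 1" F x i] z by simp
    then show ?thesis by (simp add: Finite_Cartesian_Product.vec_eq_iff)
  qed
  note inv = pd_inverse[OF R]
  have Fx: "F *v x = - (matrix_inv R *v (transpose L *v x))"
  proof -
    have "R *v (F *v x) = - (transpose L *v x)" using e2 by (simp add: eq_neg_iff_add_eq_0 add.commute)
    then have "matrix_inv R *v (R *v (F *v x)) = - (matrix_inv R *v (transpose L *v x))"
      by (simp add: mv_neg)
    moreover have "matrix_inv R *v (R *v (F *v x)) = F *v x"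
      by (simp only: matrix_vector_mul_assoc matrix_mul_assoc inv(2) matrix_mul_lid)
    ultimately show ?thesis by simp
  qed
  show qt: "(Q - L ** matrix_inv R ** transpose L) *v x = 0"
    using e1 Fx by (simp add: matrix_vector_mult_diff_rdistrib matrix_vector_mul_assoc[symmetric]
        mv_neg)
  have "transpose L *v x = 0" using nullsp qt by blast
  then have "R *v (F *v x) = 0" using e2 by simp
  then show "F *v x = 0" by (rule pd_inj[OF R])
qed

lemma hurw:
  fixes A Y Q :: "real^'n^'n" and B L :: "real^'m^'n" and R :: "real^'m^'m" and F :: "real^'n^'m"
    and r :: nat and A0 :: "nat \<Rightarrow> real^'n^'n" and B0 :: "nat \<Rightarrow> real^'m^'n"
  assumes Y: "psd Y" and R: "pd R" and Phi: "psd (blockm Q L (transpose L) R)"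
    and nullsp: "\<forall>x. (Q - L ** matrix_inv R ** transpose L) *v x = 0 \<longrightarrow> transpose L *v x = 0"
    and det: "\<exists>K :: real^'n^'n. hurwitz (A + K ** (Q - L ** matrix_inv R ** transpose L))"
    and W: "\<forall>x. x \<bullet> ((Lyap A B F Y + PiF r A0 B0 F Y + MF Q L R F) *v x) \<le> 0"
  shows "hurwitz (A + B ** F)"
  unfolding hurwitz_def
proof (intro allI impI, elim conjE, rule ccontr)
  fix z v assume v0: "v \<noteq> 0" and ev: "cmat (A + B ** F) *v v = z *s v" and nz: "\<not> Re z < 0"
  define a where "a = (\<chi> i. Re (v$i))"
  define b where "b = (\<chi> i. Im (v$i))"
  let ?M = "A + B ** F"
  note eq = re_eq[OF ev, folded a_def b_def]
  have sym: "transpose Y = Y" using Y psd_sym by blast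
  let ?q = "\<lambda>N x. x \<bullet> (N *v x)"
  have lyq: "?q (Lyap A B F Y) a + ?q (Lyap A B F Y) b = 2 * Re z * (?q Y a + ?q Y b)"
  proof -
    have "?q (Lyap A B F Y) a + ?q (Lyap A B F Y) b
        = 2 * ((?M *v a) \<bullet> (Y *v a)) + 2 * ((?M *v b) \<bullet> (Y *v b))"
      unfolding Lyap_def lyap_form[OF sym] by simp
    also have "\<dots> = 2 * Re z * (?q Y a + ?q Y b) + 2 * Im z * (a \<bullet> (Y *v b) - b \<bullet> (Y *v a))"
      unfolding eq by (simp add: inner_diff_left inner_add_left algebra_simps)
    also have "a \<bullet> (Y *v b) = b \<bullet> (Y *v a)" by (rule inner_sym[OF sym])
    finally show ?thesis by simp
  qed
  have "0 \<le> ?q (Lyap A B F Y) a + ?q (Lyap A B F Y) b"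
    unfolding lyq using nz psd_form[OF Y, of a] psd_form[OF Y, of b] by simp
  moreover have "0 \<le> ?q (PiF r A0 B0 F Y) a" "0 \<le> ?q (PiF r A0 B0 F Y) b"
    by (simp_all add: psd_form[OF PiF_psd[of Y r A0 B0 F, OF Y]])
  moreover have "0 \<le> ?q (MF Q L R F) a" "0 \<le> ?q (MF Q L R F) b"
    by (simp_all add: psd_form[OF MF_psd[where F=F, OF Phi]])
  moreover have "?q (Lyap A B F Y + PiF r A0 B0 F Y + MF Q L R F) a \<le> 0"
    "?q (Lyap A B F Y + PiF r A0 B0 F Y + MF Q L R F) b \<le> 0" using W by auto
  ultimately have "?q (MF Q L R F) a = 0" "?q (MF Q L R F) b = 0"
    by (simp_all add: matrix_vector_mult_add_rdistrib inner_add_right)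
  note za = MF_zero[OF Phi R nullsp this(1)] and zb = MF_zero[OF Phi R nullsp this(2)]
  have vs: "v = cvec a + \<i> *s cvec b" unfolding a_def b_def by (rule cvec_split)
  have BF0: "cmat (B ** F) *v v = 0"
    unfolding vs cmat_split by (simp add: matrix_vector_mul_assoc[symmetric] za(1) zb(1) cvec_zero)
  have Q0: "cmat (Q - L ** matrix_inv R ** transpose L) *v v = 0"
    unfolding vs cmat_split by (simp add: za(2) zb(2) cvec_zero)
  obtain K :: "real^'n^'n" where K: "hurwitz (A + K ** (Q - L ** matrix_inv R ** transpose L))"
    using det by blast
  have "cmat A *v v = z *s v"
    using ev BF0 by (simp add: cmat_add matrix_vector_mult_add_rdistrib)
  then have "cmat (A + K ** (Q - L ** matrix_inv R ** transpose L)) *v v = z *s v"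
    using Q0 by (simp add: cmat_add cmat_mult matrix_vector_mult_add_rdistrib
        matrix_vector_mul_assoc[symmetric])
  then have "Re z < 0" using K v0 unfolding hurwitz_def by blast
  then show False using nz by simp
qed




lemma tendsto_mm:
  assumes "(A \<longlongrightarrow> a) F" "(B \<longlongrightarrow> b) F"
  shows "((\<lambda>k. (A k :: real^'m^'n) ** (B k :: real^'p^'m)) \<longlongrightarrow> a ** b) F"
proof (rule vec_tendstoI, rule vec_tendstoI)
  fix i j
  have "((\<lambda>k. \<Sum>l\<in>UNIV. A k $ i $ l * B k $ l $ j) \<longlongrightarrow> (\<Sum>l\<in>UNIV. a $ i $ l * b $ l $ j)) F"
    by (intro tendsto_sum tendsto_mult tendsto_vec_nth assms)
  then show "((\<lambda>k. (A k ** B k) $ i $ j) \<longlongrightarrow> (a ** b) $ i $ j) F"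
    by (simp add: matrix_matrix_mult_def)
qed

lemma tendsto_tr:
  assumes "(A \<longlongrightarrow> a) F"
  shows "((\<lambda>k. transpose (A k :: real^'m^'n)) \<longlongrightarrow> transpose a) F"
proof (rule vec_tendstoI, rule vec_tendstoI)
  fix i j
  show "((\<lambda>k. transpose (A k) $ i $ j) \<longlongrightarrow> transpose a $ i $ j) F"
    unfolding transpose_def by (simp add: tendsto_vec_nth assms)
qed

lemma tendsto_mv:
  assumes "(A \<longlongrightarrow> a) F" "(x \<longlongrightarrow> y) F"
  shows "((\<lambda>k. (A k :: real^'m^'n) *v x k) \<longlongrightarrow> a *v y) F"
proof (rule vec_tendstoI)
  fix i
  have "((\<lambda>k. \<Sum>l\<in>UNIV. A k $ i $ l * x k $ l) \<longlongrightarrow> (\<Sum>l\<in>UNIV. a $ i $ l * y $ l)) F"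
    by (intro tendsto_sum tendsto_mult tendsto_vec_nth assms)
  then show "((\<lambda>k. (A k *v x k) $ i) \<longlongrightarrow> (a *v y) $ i) F"
    by (simp add: matrix_vector_mult_def)
qed

lemma tendsto_Pi:
  assumes "(X \<longlongrightarrow> Y) F"
  shows "((\<lambda>k. Pi11 r A0 (X k)) \<longlongrightarrow> Pi11 r A0 Y) F"
    "((\<lambda>k. Pi12 r A0 B0 (X k)) \<longlongrightarrow> Pi12 r A0 B0 Y) F"
    "((\<lambda>k. Pi22 r B0 (X k)) \<longlongrightarrow> Pi22 r B0 Y) F"
  unfolding Pi11_def Pi12_def Pi22_def
  by (intro tendsto_sum tendsto_mm tendsto_const assms)+

lemma pd_coercive:
  fixes R :: "real^'n^'n"
  assumes "pd R"
  shows "\<exists>c>0. \<forall>x. c * (x \<bullet> x) \<le> x \<bullet> (R *v x)"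
proof -
  let ?S = "sphere (0::real^'n) 1"
  let ?f = "\<lambda>x. x \<bullet> (R *v x)"
  have ne: "?S \<noteq> {}"
  proof -
    obtain i :: 'n where True by blast
    have "axis i (1::real) \<in> ?S" by simp
    then show ?thesis by blast
  qed
  have cont: "continuous_on ?S ?f"
    by (intro continuous_on_inner continuous_on_id matrix_vector_mult_linear_continuous_on[THEN continuous_on_compose2]) auto
  obtain x0 where x0: "x0 \<in> ?S" "\<forall>y\<in>?S. ?f x0 \<le> ?f y"
    using continuous_attains_inf[OF compact_sphere ne cont] by blast
  have x0nz: "x0 \<noteq> 0" using x0(1) by auto
  have c: "0 < ?f x0" using assms x0nz unfolding pd_def by blast
  have "?f x0 * (x \<bullet> x) \<le> ?f x" for x
  proof (cases "x = 0")
    case True then show ?thesis by simp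
  next
    case False
    define y where "y = (1 / norm x) *\<^sub>R x"
    have "y \<in> ?S" using False by (simp add: y_def)
    then have "?f x0 \<le> ?f y" using x0(2) by blast
    also have "?f y = ?f x / (norm x)^2"
      by (simp add: y_def matrix_vector_mult_scaleR power2_eq_square)
    finally have "?f x0 * (norm x)^2 \<le> ?f x" using False by (simp add: pos_le_divide_eq)
    then show ?thesis by (simp add: power2_norm_eq_inner)
  qed
  then show ?thesis using c by blast
qed

lemma mv_axis: "((M::real^'n^'m) *v axis j 1) $ i = M $ i $ j"
  by (simp add: matrix_vector_mult_def axis_def if_distrib cong: if_cong)

lemma inv_conv:
  fixes R :: "real^'m^'m" and P :: "nat \<Rightarrow> real^'m^'m"
  assumes R: "pd R" and Pk: "\<forall>k. psd (P k)" and P0: "psd P0" and lim: "P \<longlonglongrightarrow> P0"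
  shows "(\<lambda>k. matrix_inv (R + P k)) \<longlonglongrightarrow> matrix_inv (R + P0)"
proof -
  obtain c where c0: "c > 0" and coerc: "\<forall>x. c * (x \<bullet> x) \<le> x \<bullet> (R *v x)"
    using pd_coercive[OF R] by blast
  define Gk where "Gk k = matrix_inv (R + P k)" for k
  define G where "G = matrix_inv (R + P0)"
  have invk: "(R + P k) ** Gk k = Finite_Cartesian_Product.mat 1" "Gk k ** (R + P k) = Finite_Cartesian_Product.mat 1" for k
    unfolding Gk_def using pd_inverse[OF pd_add_psd[OF R Pk[rule_format, of k]]] by auto
  have inv0: "(R + P0) ** G = Finite_Cartesian_Product.mat 1"
    unfolding G_def using pd_inverse[OF pd_add_psd[OF R P0]] by auto
  have bound: "norm (Gk k *v w) \<le> norm w / c" for k w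
  proof -
    define z where "z = Gk k *v w"
    have zw: "(R + P k) *v z = w" unfolding z_def
      by (simp only: matrix_vector_mul_assoc invk(1) matrix_vector_mul_lid)
    have "c * (z \<bullet> z) \<le> z \<bullet> (R *v z)" using coerc by blast
    also have "\<dots> \<le> z \<bullet> (R *v z) + z \<bullet> (P k *v z)" using psd_form[OF Pk[rule_format, of k]] by simp
    also have "\<dots> = z \<bullet> w" using zw by (metis matrix_vector_mult_add_rdistrib inner_add_right)
    also have "\<dots> \<le> norm z * norm w" using Cauchy_Schwarz_ineq2[of z w] by linarith
    finally have "c * (norm z * norm z) \<le> norm z * norm w" by (simp add: power2_norm_eq_inner[symmetric] power2_eq_square) 
    then have "c * norm z \<le> norm w"
      by (cases "norm z = 0") (auto simp: mult.assoc mult.left_commute[of c])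
    then show ?thesis using c0 unfolding z_def by (simp add: pos_le_divide_eq mult.commute)
  qed
  have diff: "(Gk k - G) *v y = Gk k *v ((P0 - P k) *v (G *v y))" for k y
  proof -
    define u where "u = G *v y"
    have yu: "(R + P0) *v u = y" unfolding u_def
      by (simp only: matrix_vector_mul_assoc inv0 matrix_vector_mul_lid)
    have uu: "Gk k *v ((R + P k) *v u) = u"
      by (simp only: matrix_vector_mul_assoc invk(2) matrix_vector_mul_lid)
    have "(Gk k - G) *v y = Gk k *v ((R + P0) *v u) - Gk k *v ((R + P k) *v u)"
      using yu uu by (simp add: matrix_vector_mult_diff_rdistrib u_def)
    also have "\<dots> = Gk k *v ((P0 - P k) *v u)"
      by (simp add: matrix_vector_mult_diff_distrib[symmetric] matrix_vector_mult_diff_rdistrib[symmetric])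
    finally show ?thesis unfolding u_def .
  qed
  have conv: "(\<lambda>k. (Gk k - G) *v y) \<longlonglongrightarrow> 0" for y
  proof (rule Lim_null_comparison)
    show "\<forall>\<^sub>F k in sequentially. norm ((Gk k - G) *v y) \<le> norm ((P0 - P k) *v (G *v y)) / c"
      unfolding diff using bound by simp
    have "(\<lambda>k. (P0 - P k) *v (G *v y)) \<longlonglongrightarrow> (P0 - P0) *v (G *v y)"
      by (intro tendsto_mv tendsto_diff tendsto_const lim)
    then have "(\<lambda>k. (P0 - P k) *v (G *v y)) \<longlonglongrightarrow> 0" by simp
    then show "(\<lambda>k. norm ((P0 - P k) *v (G *v y)) / c) \<longlonglongrightarrow> 0"
      by (intro tendsto_divide_zero tendsto_norm_zero)
  qed
  have "Gk \<longlonglongrightarrow> G"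
  proof (rule vec_tendstoI, rule vec_tendstoI)
    fix i j
    have "(\<lambda>k. ((Gk k - G) *v axis j 1) $ i) \<longlonglongrightarrow> (0::real^'m) $ i"
      by (rule tendsto_vec_nth[OF conv])
    then have "(\<lambda>k. Gk k $ i $ j - G $ i $ j) \<longlonglongrightarrow> 0" by (simp add: mv_axis)
    then show "(\<lambda>k. Gk k $ i $ j) \<longlonglongrightarrow> G $ i $ j" by (simp add: LIM_zero_iff)
  qed
  then show ?thesis unfolding Gk_def G_def .
qed

lemma PiF_blk: "transpose (vstack (Finite_Cartesian_Product.mat 1) F) ** PiM r A0 B0 Y ** vstack (Finite_Cartesian_Product.mat 1) F
   = PiF r A0 B0 F Y"
  unfolding PiM_def blk_quad PiF_def by (simp add: transpose_mat)

lemma quad_axis: "axis i 1 \<bullet> ((M::real^'n^'n) *v axis j 1) = M $ i $ j"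
  by (simp add: inner_axis' mv_axis)

lemma loewner_conv:
  fixes X :: "nat \<Rightarrow> real^'n^'n"
  assumes dec: "\<forall>k. loewner_ge (X k) (X (Suc k))" and lb: "\<forall>k. loewner_ge (X k) Lb"
    and sym: "\<forall>k. transpose (X k) = X k"
  shows "\<exists>Y. X \<longlonglongrightarrow> Y"
proof -
  have "\<exists>l. (\<lambda>k. x \<bullet> (X k *v x)) \<longlonglongrightarrow> l" for x
  proof -
    have "decseq (\<lambda>k. x \<bullet> (X k *v x))"
    proof (rule decseq_SucI)
      fix k
      have "0 \<le> x \<bullet> ((X k - X (Suc k)) *v x)" using dec psd_form unfolding loewner_ge_def by blast
      then show "x \<bullet> (X (Suc k) *v x) \<le> x \<bullet> (X k *v x)"
        by (simp add: matrix_vector_mult_diff_rdistrib inner_diff_right)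
    qed
    moreover have "\<forall>k. x \<bullet> (Lb *v x) \<le> x \<bullet> (X k *v x)"
    proof
      fix k
      have "0 \<le> x \<bullet> ((X k - Lb) *v x)" using lb psd_form unfolding loewner_ge_def by blast
      then show "x \<bullet> (Lb *v x) \<le> x \<bullet> (X k *v x)"
        by (simp add: matrix_vector_mult_diff_rdistrib inner_diff_right)
    qed
    ultimately show ?thesis using decseq_convergent by metis
  qed
  then obtain l where l: "\<And>x. (\<lambda>k. x \<bullet> (X k *v x)) \<longlonglongrightarrow> l x" by metis
  define Y where "Y = (\<chi> i j. (l (axis i 1 + axis j 1) - l (axis i 1 - axis j 1)) / 4)"
  have "X \<longlonglongrightarrow> Y"
  proof (rule vec_tendstoI, rule vec_tendstoI)
    fix i j
    let ?a = "axis i (1::real) :: real^'n" and ?b = "axis j (1::real) :: real^'n"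
    have pol: "X k $ i $ j = ((?a + ?b) \<bullet> (X k *v (?a + ?b)) - (?a - ?b) \<bullet> (X k *v (?a - ?b))) / 4" for k
    proof -
      have "?b \<bullet> (X k *v ?a) = ?a \<bullet> (X k *v ?b)" using inner_sym[OF sym[rule_format, of k]] by metis
      then show ?thesis
        by (simp add: matrix_vector_right_distrib matrix_vector_mult_diff_distrib inner_add_left
            inner_add_right inner_diff_left inner_diff_right quad_axis)
    qed
    have "(\<lambda>k. ((?a + ?b) \<bullet> (X k *v (?a + ?b)) - (?a - ?b) \<bullet> (X k *v (?a - ?b))) / 4)
        \<longlonglongrightarrow> (l (?a + ?b) - l (?a - ?b)) / 4"
      by (intro tendsto_divide tendsto_diff l tendsto_const) simp
    then show "(\<lambda>k. X k $ i $ j) \<longlonglongrightarrow> Y $ i $ j" unfolding pol Y_def by simp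
  qed
  then show ?thesis by blast
qed




lemma mv_neg_l: "(- (M::'a::ring_1^'n^'m)) *v x = - (M *v x)"
  by (simp add: Finite_Cartesian_Product.vec_eq_iff matrix_vector_mult_def sum_negf)

lemma g1: fixes a :: "'a::ab_group_add" assumes h1: "a + p + m = r" and h2: "b + p + m = 0" shows "a - b = -(0 - r)"
proof -
  have "(a - b) - (-(0 - r)) = ((a + p + m) - r) - ((b + p + m) - 0)" by (simp add: algebra_simps)
  then show ?thesis using h1 h2 by simp
qed
lemma g2: fixes a :: "'a::ab_group_add" assumes h1: "a + p + m = 0 + d" and h2: "b + q + m = 0" shows "b - a = -((q - p) + d)"
proof -
  have "(b - a) - (-((q - p) + d)) = ((b + q + m) - 0) - ((a + p + m) - (0 + d))" by (simp add: algebra_simps)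
  then show ?thesis using h1 h2 by simp
qed
lemma g3: fixes b :: "'a::ab_group_add" assumes h1: "b + p1 + m = r + d" and h2: "b + pk + m = 0" shows "0 - r = (pk - p1) + d"
proof -
  have "(0 - r) - ((pk - p1) + d) = ((b + p1 + m) - (r + d)) - ((b + pk + m) - 0)" by (simp add: algebra_simps)
  then show ?thesis using h1 h2 by simp
qed

hide_const (open) Matrix.mat

theorem theoremC3:
  fixes A Q :: "real^'n^'n" and B L :: "real^'m^'n" and R :: "real^'m^'m"
    and r :: nat and A0 :: "nat \<Rightarrow> real^'n^'n" and B0 :: "nat \<Rightarrow> real^'m^'n"
    and C :: "real^'n^'p"
    and Xs :: "real^'n^'n" and X :: "nat \<Rightarrow> real^'n^'n"
  assumes A00: "A0 0 = A" and B00: "B0 0 = B"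
    \<comment> \<open>(1)\<close>
    and R_pd: "pd R"
    and QLR_psd: "psd (blockm Q L (transpose L) R)"
    \<comment> \<open>(2)\<close>
    and stab2: "\<exists>F :: real^'n^'m. exp_stable (\<lambda>S.
         (A + B ** F) ** S + S ** transpose (A + B ** F)
         + (\<Sum>i\<in>{1..r}. (A0 i + B0 i ** F) ** S ** transpose (A0 i + B0 i ** F)))"
    \<comment> \<open>(3)\<close>
    and C_fact: "transpose C ** C = Q - L ** matrix_inv R ** transpose L"
    and detect3: "\<exists>K :: real^'p^'n. exp_stable (\<lambda>S.
         ((A0 0 - B0 0 ** matrix_inv R ** transpose L) + K ** C) ** S
         + S ** transpose ((A0 0 - B0 0 ** matrix_inv R ** transpose L) + K ** C)
         + (\<Sum>i\<in>{1..r}. (A0 i - B0 i ** matrix_inv R ** transpose L) ** S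
                           ** transpose (A0 i - B0 i ** matrix_inv R ** transpose L)))"
    \<comment> \<open>(4)\<close>
    and nullsp: "\<forall>x. (Q - L ** matrix_inv R ** transpose L) *v x = 0 \<longrightarrow>
                    transpose L *v x = 0 \<and> (\<forall>i\<in>{1..r}. A0 i *v x = 0)"
    \<comment> \<open>(5)\<close>
    and stabilizable: "\<exists>F :: real^'n^'m. hurwitz (A + B ** F)"
    and detectable: "\<exists>K :: real^'n^'n. hurwitz (A + K ** (Q - L ** matrix_inv R ** transpose L))"
    \<comment> \<open>X_* is the unique positive semidefinite solution of \<R>(X) = 0\<close>
    and Xs_psd: "psd Xs" and Xs_sol: "Ric A B Q L R r A0 B0 Xs = 0"
    and Xs_unique: "\<forall>Y. psd Y \<and> Ric A B Q L R r A0 B0 Y = 0 \<longrightarrow> Y = Xs"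
    \<comment> \<open>the modified Newton iteration\<close>
    and X0_sym: "transpose (X 0) = X 0"
    and newton: "\<forall>k. let Rk = R + Pi22 r B0 (X k);
                        Sk = X k ** B + L + Pi12 r A0 B0 (X k);
                        Ahk = A - B ** matrix_inv Rk ** transpose Sk;
                        Pk = vstack (mat 1 :: real^'n^'n) (- (matrix_inv Rk ** transpose Sk));
                        Pihk = transpose Pk ** PiM r A0 B0 (X k) ** Pk;
                        Mk = transpose Pk ** blockm Q L (transpose L) R ** Pk
                    in transpose Ahk ** X (Suc k) + X (Suc k) ** Ahk + Pihk + Mk = 0"
    and X0_ge: "loewner_ge (X 0) Xs"
    and X0_hurwitz: "hurwitz (Ac A B L R r A0 B0 (X 0) - Gc B R r B0 (X 0) ** X 0)"
    and X0_Ric: "loewner_ge 0 (Ric A B Q L R r A0 B0 (X 0))"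
    and Xk_psd: "\<forall>k. psd (X k)"
  shows "(\<forall>k. loewner_ge (X k) (X (Suc k)) \<and> loewner_ge (X k) Xs
              \<and> loewner_ge 0 (Ric A B Q L R r A0 B0 (X k)))
         \<and> X \<longlonglongrightarrow> Xs"
proof -
  let ?I = "Finite_Cartesian_Product.mat 1 :: real^'n^'n"
  let ?Ric = "Ric A B Q L R r A0 B0"
  define Kx where "Kx Y = matrix_inv (R + Pi22 r B0 Y) ** transpose (Y ** B + L + Pi12 r A0 B0 Y)" for Y
  define Fk where "Fk k = - Kx (X k)" for k
  have nullsp': "\<forall>x. (Q - L ** matrix_inv R ** transpose L) *v x = 0 \<longrightarrow> transpose L *v x = 0"
    using nullsp by blast
  have newt: "Lyap A B (Fk k) (X (Suc k)) + PiF r A0 B0 (Fk k) (X k) + MF Q L R (Fk k) = 0" for k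
  proof -
    have h: "let Rk = R + Pi22 r B0 (X k);
                        Sk = X k ** B + L + Pi12 r A0 B0 (X k);
                        Ahk = A - B ** matrix_inv Rk ** transpose Sk;
                        Pk = vstack (Finite_Cartesian_Product.mat 1 :: real^'n^'n) (- (matrix_inv Rk ** transpose Sk));
                        Pihk = transpose Pk ** PiM r A0 B0 (X k) ** Pk;
                        Mk = transpose Pk ** blockm Q L (transpose L) R ** Pk
                    in transpose Ahk ** X (Suc k) + X (Suc k) ** Ahk + Pihk + Mk = 0"
      using newton by blast
    have e2: "- (matrix_inv (R + Pi22 r B0 (X k)) ** transpose (X k ** B + L + Pi12 r A0 B0 (X k))) = Fk k"
      by (simp add: Fk_def Kx_def)
    have e1: "A - B ** matrix_inv (R + Pi22 r B0 (X k)) ** transpose (X k ** B + L + Pi12 r A0 B0 (X k))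
        = A + B ** Fk k"
      unfolding e2[symmetric] by (simp add: mat_simps)
    show ?thesis using h unfolding Let_def e1 e2 PiF_blk MF_blk[symmetric] Lyap_def .
  qed
  have idz: "Lyap A B (- Kx Y) Y + PiF r A0 B0 (- Kx Y) Y + MF Q L R (- Kx Y) = ?Ric Y" if "psd Y" for Y
  proof -
    note i = ident[where A=A and B=B and L=L and r=r and Az=A0 and Bz=B0 and F="- Kx Y" and Q=Q, OF that R_pd]
    show ?thesis using i unfolding Kx_def by (simp add: mat_simps)
  qed
  have idg: "\<exists>D. psd D \<and> Lyap A B F Y + PiF r A0 B0 F Y + MF Q L R F = ?Ric Y + D" if "psd Y" for F Y
  proof -
    have "psd (R + Pi22 r B0 Y)" using pd_psd[OF pd_add_psd[OF R_pd Pi22_psd[of Y r B0, OF that]]] .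
    then show ?thesis using ident[where A=A and B=B and L=L and r=r and Az=A0 and Bz=B0 and F=F and Q=Q, OF that R_pd] psd_cong by blast
  qed
  have neg: "\<forall>x. x \<bullet> (M *v x) \<le> 0" if "loewner_ge 0 M" for M :: "real^'n^'n"
  proof
    fix x
    have "0 \<le> x \<bullet> ((0 - M) *v x)" using that psd_form unfolding loewner_ge_def by blast
    then show "x \<bullet> (M *v x) \<le> 0" by (simp add: mv_neg_l)
  qed
  have lyapD: "psd D" if "hurwitz (A + B ** F)" "transpose D = D" "Lyap A B F D = - N" "psd N" for F D N
  proof (rule lyap_psd[OF that(1) that(2)])
    show "\<forall>x. x \<bullet> ((transpose (A + B ** F) ** D + D ** (A + B ** F)) *v x) \<le> 0"
    proof
      fix x
      have "0 \<le> x \<bullet> (N *v x)" using psd_form[OF that(4)] .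
      moreover have "(transpose (A + B ** F) ** D + D ** (A + B ** F)) *v x = - (N *v x)"
        using that(3) unfolding Lyap_def by (simp add: mv_neg_l)
      ultimately show "x \<bullet> ((transpose (A + B ** F) ** D + D ** (A + B ** F)) *v x) \<le> 0" by simp
    qed
  qed
  have symX: "transpose (X k) = X k" for k using Xk_psd psd_sym by blast
  have symXs: "transpose Xs = Xs" using Xs_psd psd_sym by blast
  have step: "loewner_ge (X k) (X (Suc k)) \<and> loewner_ge (X (Suc k)) Xs \<and> loewner_ge 0 (?Ric (X (Suc k)))"
    if Pk: "loewner_ge (X k) Xs" "loewner_ge 0 (?Ric (X k))" for k
  proof -
    define F where "F = Fk k"
    have Wk: "Lyap A B F (X k) + PiF r A0 B0 F (X k) + MF Q L R F = ?Ric (X k)"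
      unfolding F_def Fk_def by (rule idz[OF Xk_psd[rule_format]])
    have nt: "Lyap A B F (X (Suc k)) + PiF r A0 B0 F (X k) + MF Q L R F = 0"
      unfolding F_def by (rule newt)
    have W: "\<forall>x. x \<bullet> ((Lyap A B F (X k) + PiF r A0 B0 F (X k) + MF Q L R F) *v x) \<le> 0"
      unfolding Wk by (rule neg[OF Pk(2)])
    have hur: "hurwitz (A + B ** F)"
      by (rule hurw[OF Xk_psd[rule_format, of k] R_pd QLR_psd nullsp' detectable W])
    have d1: "Lyap A B F (X k - X (Suc k)) = - (0 - ?Ric (X k))"
      unfolding Lyap_diff by (rule g1[OF Wk nt])
    have g1: "loewner_ge (X k) (X (Suc k))" unfolding loewner_ge_def
      by (rule lyapD[OF hur _ d1]) (use Pk(2) symX in \<open>auto simp: loewner_ge_def tr_diff\<close>)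
    obtain Ds where Ds: "psd Ds" "Lyap A B F Xs + PiF r A0 B0 F Xs + MF Q L R F = ?Ric Xs + Ds"
      using idg[OF Xs_psd] by blast
    have d2: "Lyap A B F (X (Suc k) - Xs) = - (PiF r A0 B0 F (X k - Xs) + Ds)"
      unfolding Lyap_diff PiF_diff by (rule g2[OF Ds(2)[unfolded Xs_sol] nt])
    have g2: "loewner_ge (X (Suc k)) Xs" unfolding loewner_ge_def
      by (rule lyapD[OF hur _ d2]) (use Pk(1) Ds(1) symX symXs in \<open>auto simp: loewner_ge_def tr_diff intro: psd_add PiF_psd\<close>)
    obtain D1 where D1: "psd D1" "Lyap A B F (X (Suc k)) + PiF r A0 B0 F (X (Suc k)) + MF Q L R F = ?Ric (X (Suc k)) + D1"
      using idg[OF Xk_psd[rule_format, of "Suc k"]] by blast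
    have "0 - ?Ric (X (Suc k)) = PiF r A0 B0 F (X k - X (Suc k)) + D1"
      unfolding PiF_diff by (rule g3[OF D1(2) nt])
    then have g3: "loewner_ge 0 (?Ric (X (Suc k)))" unfolding loewner_ge_def
      using g1 D1(1) unfolding loewner_ge_def by (simp add: psd_add PiF_psd)
    show ?thesis using g1 g2 g3 by blast
  qed
  have inv: "loewner_ge (X k) Xs \<and> loewner_ge 0 (?Ric (X k))" for k
  proof (induction k)
    case 0 then show ?case using X0_ge X0_Ric by blast
  next
    case (Suc k) then show ?case using step by blast
  qed
  have partA: "\<forall>k. loewner_ge (X k) (X (Suc k)) \<and> loewner_ge (X k) Xs \<and> loewner_ge 0 (?Ric (X k))"
    using inv step by blast
  have dec: "\<forall>k. loewner_ge (X k) (X (Suc k))" and lbk: "\<forall>k. loewner_ge (X k) Xs" using partA by auto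
  obtain Y where XY: "X \<longlonglongrightarrow> Y" using loewner_conv[OF dec lbk] symX by blast
  have symY: "transpose Y = Y"
  proof -
    have "(\<lambda>k. transpose (X k)) \<longlonglongrightarrow> transpose Y" by (rule tendsto_tr[OF XY])
    then have "X \<longlonglongrightarrow> transpose Y" using symX by simp
    then show ?thesis using XY LIMSEQ_unique by blast
  qed
  have psdY: "psd Y"
  proof -
    have "0 \<le> x \<bullet> (Y *v x)" for x
    proof -
      have "(\<lambda>k. x \<bullet> (X k *v x)) \<longlonglongrightarrow> x \<bullet> (Y *v x)" by (intro tendsto_inner tendsto_const tendsto_mv XY)
      moreover have "\<forall>k. 0 \<le> x \<bullet> (X k *v x)" using Xk_psd psd_form by blast
      ultimately show ?thesis by (intro LIMSEQ_le_const) auto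
    qed
    then show ?thesis unfolding psd_def using symY by simp
  qed
  define FY where "FY = - Kx Y"
  have FK: "Fk \<longlonglongrightarrow> FY"
  proof -
    have P: "(\<lambda>k. Pi22 r B0 (X k)) \<longlonglongrightarrow> Pi22 r B0 Y" by (rule tendsto_Pi(3)[OF XY])
    have G: "(\<lambda>k. matrix_inv (R + Pi22 r B0 (X k))) \<longlonglongrightarrow> matrix_inv (R + Pi22 r B0 Y)"
      by (rule inv_conv[OF R_pd _ Pi22_psd[OF psdY] P]) (simp add: Pi22_psd Xk_psd)
    show ?thesis unfolding Fk_def FY_def Kx_def
      by (intro tendsto_minus tendsto_mm G tendsto_tr tendsto_add tendsto_const XY tendsto_Pi(2))
  qed
  have lim: "(\<lambda>k. Lyap A B (Fk k) (X (Suc k)) + PiF r A0 B0 (Fk k) (X k) + MF Q L R (Fk k))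
      \<longlonglongrightarrow> Lyap A B FY Y + PiF r A0 B0 FY Y + MF Q L R FY"
    unfolding Lyap_def PiF_def MF_def
    by (intro tendsto_add tendsto_mm tendsto_tr tendsto_const FK XY tendsto_Pi LIMSEQ_Suc)
  then have "Lyap A B FY Y + PiF r A0 B0 FY Y + MF Q L R FY = 0"
    unfolding newt by (simp add: LIMSEQ_const_iff)
  then have "?Ric Y = 0" using idz[OF psdY] unfolding FY_def by simp
  then have "Y = Xs" using Xs_unique psdY by blast
  then show ?thesis using partA XY by simp
qed


end
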